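(* For every $W\in\mathrm{Gr}^{ad}$, $L_W=(R_W)'$, i.e. $L_W=\{q\in Q: qR_W\subset A_1\}$.
   Context: $A_1=\mathbb C[z,\partial]$, $\partial=d/dz$, with quotient skew field $Q\supset\mathbb C(z)[\partial]$. $\mathrm{Gr}^{ad}$: subspaces $W=m_V^{-1}V\subset\mathbb C(z)$ where $V\subset\mathbb C[z]$ is a finite intersection of subspaces $V_\lambda\supset(z-\lambda)^{r}\mathbb C[z]$ (distinct $\lambda$) and $m_V=\prod(z-\lambda)^{\dim\mathbb C[z]/V_\lambda}$. $R_W=\{D\in\mathbb C(z)[\partial]: D.\mathbb C[z]\subset W\}$, $L_W=\{D\in\mathbb C(z)[\partial]: D.W\subset\mathbb C[z]\}$. It is known (Cannings–Holland) that $W=\{D.1: D\in R_W\}$. *)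

theory Defs
  imports "HOL-Computational_Algebra.Computational_Algebra"
begin

type_synonym rfun = "complex poly fract"

definition polyR :: "complex poly \<Rightarrow> rfun" where
  "polyR p = Fract p 1"

text \<open>Derivative d/dz on C(z), given by the quotient rule (independent of the representative).\<close>
definition rderiv :: "rfun \<Rightarrow> rfun" where
  "rderiv x = (THE y. \<forall>p q. q \<noteq> 0 \<and> x = Fract p q \<longrightarrow>
      y = Fract (pderiv p * q - p * pderiv q) (q * q))"

text \<open>An operator is a coefficient function n \<mapsto> a_n (coefficient of d^n), n :: int,
  with support bounded above.\<close>
type_synonym op = "int \<Rightarrow> rfun"

definition is_psido :: "op \<Rightarrow> bool" where
  "is_psido f \<longleftrightarrow> (\<exists>N. \<forall>n>N. f n = 0)"

definition ubnd :: "op \<Rightarrow> int" where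
  "ubnd f = (SOME N. \<forall>n>N. f n = 0)"

text \<open>Generalised binomial coefficient (m choose k) for an integer m:
  m(m-1)...(m-k+1)/k!, which for m < 0 equals (-1)^k ((-m)+k-1 choose k).\<close>
definition ibinom :: "int \<Rightarrow> nat \<Rightarrow> int" where
  "ibinom m k = (if 0 \<le> m then int (nat m choose k)
                 else (-1) ^ k * int ((nat (-m) + k - 1) choose k))"

text \<open>Product: (a d^m)(b d^n) = \<Sum>_{k\<ge>0} (m choose k) a b^{(k)} d^{m+n-k}.\<close>
definition opmult :: "op \<Rightarrow> op \<Rightarrow> op" where
  "opmult f g = (\<lambda>d::int. \<Sum>m\<in>{d - ubnd g .. ubnd f}. \<Sum>n\<in>{d - m .. ubnd g}.
      of_int (ibinom m (nat (m + n - d))) * f m * (rderiv ^^ nat (m + n - d)) (g n))"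

definition is_diffop :: "op \<Rightarrow> bool" where
  "is_diffop f \<longleftrightarrow> is_psido f \<and> (\<forall>n<0. f n = 0)"

text \<open>The Weyl algebra A_1 = C[z,d]: differential operators with polynomial coefficients.\<close>
definition weyl :: "op set" where
  "weyl = {f. is_diffop f \<and> (\<forall>n. f n \<in> range polyR)}"

text \<open>The quotient skew field Q of A_1, realised inside the pseudo-differential operators
  as {a b^-1 : a, b \<in> A_1, b \<noteq> 0} = {q : \<exists>b\<in>A_1. b \<noteq> 0 \<and> q b \<in> A_1}.\<close>
definition Qfield :: "op set" where
  "Qfield = {q. is_psido q \<and> (\<exists>b\<in>weyl. b \<noteq> (\<lambda>_. 0) \<and> opmult q b \<in> weyl)}"

definition act :: "op \<Rightarrow> rfun \<Rightarrow> rfun" where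
  "act D w = (\<Sum>n\<in>{0..ubnd D}. D n * (rderiv ^^ nat n) w)"

definition csubspace :: "complex poly set \<Rightarrow> bool" where
  "csubspace V \<longleftrightarrow> 0 \<in> V \<and> (\<forall>p\<in>V. \<forall>q\<in>V. p + q \<in> V) \<and> (\<forall>c. \<forall>p\<in>V. smult c p \<in> V)"

text \<open>dim C[z]/V: the least number of polynomials spanning C[z] modulo V.\<close>
definition codim :: "complex poly set \<Rightarrow> nat" where
  "codim V = (LEAST k. \<exists>ps :: complex poly list. length ps = k \<and>
      (\<forall>p. \<exists>v\<in>V. \<exists>cs :: complex list. length cs = k \<and>
          p = v + (\<Sum>i<k. smult (cs ! i) (ps ! i))))"

definition Grad :: "rfun set set" where
  "Grad = {W. \<exists>(\<Lambda> :: complex set) (Vs :: complex \<Rightarrow> complex poly set).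
      finite \<Lambda> \<and>
      (\<forall>c\<in>\<Lambda>. csubspace (Vs c) \<and> (\<exists>r::nat. \<forall>p. [:-c, 1:] ^ r dvd p \<longrightarrow> p \<in> Vs c)) \<and>
      W = (\<lambda>p. polyR p / polyR (\<Prod>c\<in>\<Lambda>. [:-c, 1:] ^ codim (Vs c))) ` (\<Inter>c\<in>\<Lambda>. Vs c)}"

definition RW :: "rfun set \<Rightarrow> op set" where
  "RW W = {D. is_diffop D \<and> (\<forall>p. act D (polyR p) \<in> W)}"

definition LW :: "rfun set \<Rightarrow> op set" where
  "LW W = {D. is_diffop D \<and> (\<forall>w\<in>W. act D w \<in> range polyR)}"

definition dual_right :: "op set \<Rightarrow> op set" where
  "dual_right R = {q \<in> Qfield. \<forall>D\<in>R. opmult q D \<in> weyl}"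

end

theory Submission
  imports Defs "HOL-Computational_Algebra.Field_as_Ring"
begin

lemma rderiv_Fract:
  assumes "q \<noteq> 0"
  shows "rderiv (Fract p q) = Fract (pderiv p * q - p * pderiv q) (q * q)"
  unfolding rderiv_def
proof (rule the_equality)
  show "\<forall>p' q'. q' \<noteq> 0 \<and> Fract p q = Fract p' q' \<longrightarrow>
      Fract (pderiv p * q - p * pderiv q) (q * q) = Fract (pderiv p' * q' - p' * pderiv q') (q' * q')"
  proof (intro allI impI, elim conjE)
    fix p' q' :: "complex poly"
    assume q': "q' \<noteq> 0" and e: "Fract p q = Fract p' q'"
    have h1: "p * q' = p' * q" using e assms q' by (simp add: eq_fract)
    have h2: "pderiv p * q' + p * pderiv q' = pderiv p' * q + p' * pderiv q"
      using arg_cong[OF h1, of pderiv] by (simp add: pderiv_mult algebra_simps)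
    have "(pderiv p * q - p * pderiv q) * (q' * q') = (pderiv p' * q' - p' * pderiv q') * (q * q)"
      using h1 h2 by algebra
    then show "Fract (pderiv p * q - p * pderiv q) (q * q) = Fract (pderiv p' * q' - p' * pderiv q') (q' * q')"
      using assms q' by (simp add: eq_fract)
  qed
next
  fix y assume "\<forall>p' q'. q' \<noteq> 0 \<and> Fract p q = Fract p' q' \<longrightarrow> y = Fract (pderiv p' * q' - p' * pderiv q') (q' * q')"
  then show "y = Fract (pderiv p * q - p * pderiv q) (q * q)" using assms by blast
qed

lemma rderiv_add: "rderiv (x + y) = rderiv x + rderiv y"
proof (cases x, cases y)
  fix a b c d assume x: "x = Fract a b" "b \<noteq> 0" and y: "y = Fract c d" "d \<noteq> 0"
  show ?thesis using x y by (simp add: rderiv_Fract eq_fract pderiv_mult pderiv_add algebra_simps)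
qed

lemma rderiv_mult: "rderiv (x * y) = rderiv x * y + x * rderiv y"
proof (cases x, cases y)
  fix a b c d assume x: "x = Fract a b" "b \<noteq> 0" and y: "y = Fract c d" "d \<noteq> 0"
  show ?thesis using x y by (simp add: rderiv_Fract eq_fract pderiv_mult pderiv_add algebra_simps)
qed

lemma rderiv_polyR: "rderiv (polyR p) = polyR (pderiv p)"
  by (simp add: polyR_def rderiv_Fract)

lemma rderiv_const: "rderiv (Fract [:c:] 1) = 0"
  by (simp add: rderiv_Fract fract_collapse)

lemma rderiv_0[simp]: "rderiv 0 = 0"
  using rderiv_const[of 0] by (simp add: fract_collapse)

lemma rderiv_1[simp]: "rderiv 1 = 0"
  using rderiv_Fract[of 1 1] by (simp add: fract_collapse)

lemma rderiv_of_nat[simp]: "rderiv (of_nat k) = 0"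
  by (induct k) (simp_all add: rderiv_add)

lemma rderiv_minus: "rderiv (- x) = - rderiv x"
proof -
  have "rderiv x + rderiv (-x) = 0" using rderiv_add[of x "-x"] by simp
  then show ?thesis by (simp add: add_eq_0_iff)
qed

lemma rderiv_diff: "rderiv (x - y) = rderiv x - rderiv y"
  using rderiv_add[of x "-y"] by (simp add: rderiv_minus)

lemma rderiv_of_int[simp]: "rderiv (of_int k) = 0"
  by (cases k) (simp_all add: rderiv_minus rderiv_diff)

lemma rderiv_sum: "rderiv (\<Sum>i\<in>A. f i) = (\<Sum>i\<in>A. rderiv (f i))"
  by (induct A rule: infinite_finite_induct) (simp_all add: rderiv_add)

lemma rderiv_cmult: "rderiv c = 0 \<Longrightarrow> rderiv (c * x) = c * rderiv x"
  by (simp add: rderiv_mult)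

lemma rd_add: "(rderiv ^^ n) (x + y) = (rderiv ^^ n) x + (rderiv ^^ n) y"
  by (induct n) (simp_all add: rderiv_add)

lemma rd_diff: "(rderiv ^^ n) (x - y) = (rderiv ^^ n) x - (rderiv ^^ n) y"
  by (induct n) (simp_all add: rderiv_diff)

lemma rd_0[simp]: "(rderiv ^^ n) 0 = 0"
  by (induct n) simp_all

lemma rd_sum: "(rderiv ^^ n) (\<Sum>i\<in>A. f i) = (\<Sum>i\<in>A. (rderiv ^^ n) (f i))"
  by (induct A rule: infinite_finite_induct) (simp_all add: rd_add)

lemma rd_cmult: "rderiv c = 0 \<Longrightarrow> (rderiv ^^ n) (c * x) = c * (rderiv ^^ n) x"
  by (induct n) (simp_all add: rderiv_cmult)

lemma rd_polyR: "(rderiv ^^ n) (polyR p) = polyR ((pderiv ^^ n) p)"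
  by (induct n) (simp_all add: rderiv_polyR)

lemma rd_Suc: "(rderiv ^^ Suc n) x = (rderiv ^^ n) (rderiv x)"
  by (metis comp_apply funpow_Suc_right)

lemma Suc_choose': "Suc n choose k = (n choose k) + (if k = 0 then 0 else (n choose (k-1)))"
  by (cases k) simp_all

lemma pascal_sum:
  fixes a b :: "nat \<Rightarrow> 'a::comm_ring_1"
  shows "(\<Sum>i\<le>n. of_nat (n choose i) * a (Suc i) * b (n-i)) + (\<Sum>i\<le>n. of_nat (n choose i) * a i * b (Suc (n-i)))
       = (\<Sum>i\<le>Suc n. of_nat (Suc n choose i) * a i * b (Suc n - i))"
proof -
  have "(\<Sum>i\<le>Suc n. of_nat (Suc n choose i) * a i * b (Suc n - i))
     = (\<Sum>i\<le>Suc n. of_nat (n choose i) * a i * b (Suc n - i))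
       + (\<Sum>i\<le>Suc n. of_nat (if i = 0 then 0 else (n choose (i - 1))) * a i * b (Suc n - i))"
    by (simp add: Suc_choose' sum.distrib[symmetric] algebra_simps)
  also have "(\<Sum>i\<le>Suc n. of_nat (n choose i) * a i * b (Suc n - i)) = (\<Sum>i\<le>n. of_nat (n choose i) * a i * b (Suc (n-i)))"
    by (simp add: Suc_diff_le binomial_eq_0)
  also have "(\<Sum>i\<le>Suc n. of_nat (if i = 0 then 0 else (n choose (i - 1))) * a i * b (Suc n - i))
     = (\<Sum>i\<le>n. of_nat (n choose i) * a (Suc i) * b (n-i))"
    by (subst sum.atMost_Suc_shift) simp
  finally show ?thesis by simp
qed

lemma rd_mult:
  "(rderiv ^^ n) (x * y) = (\<Sum>i\<le>n. of_nat (n choose i) * (rderiv ^^ i) x * (rderiv ^^ (n-i)) y)"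
proof (induction n)
  case 0 then show ?case by simp
next
  case (Suc n)
  have "(rderiv ^^ Suc n) (x * y) = rderiv (\<Sum>i\<le>n. of_nat (n choose i) * (rderiv ^^ i) x * (rderiv ^^ (n-i)) y)"
    using Suc.IH by simp
  also have "\<dots> = (\<Sum>i\<le>n. of_nat (n choose i) * (rderiv ^^ Suc i) x * (rderiv ^^ (n-i)) y)
     + (\<Sum>i\<le>n. of_nat (n choose i) * (rderiv ^^ i) x * (rderiv ^^ Suc (n-i)) y)"
    by (simp add: rderiv_sum rderiv_mult algebra_simps sum.distrib)
  also have "\<dots> = (\<Sum>i\<le>Suc n. of_nat (Suc n choose i) * (rderiv ^^ i) x * (rderiv ^^ (Suc n - i)) y)"
    by (rule pascal_sum[where a = "\<lambda>i. (rderiv ^^ i) x" and b = "\<lambda>i. (rderiv ^^ i) y"])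
  finally show ?case .
qed

lemma ubnd_prop: "is_psido f \<Longrightarrow> n > ubnd f \<Longrightarrow> f n = 0"
proof -
  assume a: "is_psido f" "n > ubnd f"
  from a(1) have "\<forall>n>ubnd f. f n = 0" unfolding is_psido_def ubnd_def by (rule someI_ex)
  with a(2) show ?thesis by blast
qed

lemma polyR_add: "polyR (p + q) = polyR p + polyR q"
  by (simp add: polyR_def)
lemma polyR_mult: "polyR (p * q) = polyR p * polyR q"
  by (simp add: polyR_def)
lemma polyR_diff: "polyR (p - q) = polyR p - polyR q"
  by (simp add: polyR_def)
lemma polyR_0[simp]: "polyR 0 = 0"
  by (simp add: polyR_def fract_collapse)
lemma polyR_1[simp]: "polyR 1 = 1"
  by (simp add: polyR_def fract_collapse)
lemma polyR_sum: "polyR (\<Sum>i\<in>A. f i) = (\<Sum>i\<in>A. polyR (f i))"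
  by (induct A rule: infinite_finite_induct) (simp_all add: polyR_add)
lemma polyR_eq_iff: "polyR p = polyR q \<longleftrightarrow> p = q"
  by (simp add: polyR_def eq_fract)
lemma polyR_eq_0_iff[simp]: "polyR p = 0 \<longleftrightarrow> p = 0"
  using polyR_eq_iff[of p 0] by simp
lemma polyR_minus: "polyR (- p) = - polyR p"
  by (simp add: polyR_def)
lemma polyR_of_nat: "of_nat k = polyR (of_nat k)"
  by (induct k) (simp_all add: polyR_add)
lemma polyR_of_int: "of_int k = polyR (of_int k)"
  by (cases k) (simp_all add: polyR_add polyR_diff polyR_minus polyR_of_nat[symmetric])

lemma rP_add: "x \<in> range polyR \<Longrightarrow> y \<in> range polyR \<Longrightarrow> x + y \<in> range polyR"
  by (auto simp flip: polyR_add)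
lemma rP_mult: "x \<in> range polyR \<Longrightarrow> y \<in> range polyR \<Longrightarrow> x * y \<in> range polyR"
  by (auto simp flip: polyR_mult)
lemma rP_diff: "x \<in> range polyR \<Longrightarrow> y \<in> range polyR \<Longrightarrow> x - y \<in> range polyR"
  by (auto simp flip: polyR_diff)
lemma rP_0: "0 \<in> range polyR" by (metis polyR_0 rangeI)
lemma rP_sum: "(\<And>i. i \<in> A \<Longrightarrow> f i \<in> range polyR) \<Longrightarrow> (\<Sum>i\<in>A. f i) \<in> range polyR"
  by (induct A rule: infinite_finite_induct) (simp_all add: rP_0 rP_add)
lemma rP_rd: "x \<in> range polyR \<Longrightarrow> (rderiv ^^ n) x \<in> range polyR"
  by (metis rd_polyR rangeE rangeI)
lemma rP_of_nat: "of_nat k \<in> range polyR"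
  by (metis polyR_of_nat rangeI)

lemma sum_cong_support:
  assumes "finite A" "finite B" "\<And>x. x \<in> A - B \<Longrightarrow> f x = 0" "\<And>x. x \<in> B - A \<Longrightarrow> g x = 0"
    "\<And>x. x \<in> A \<inter> B \<Longrightarrow> f x = g x"
  shows "sum f A = sum g B"
proof -
  have "sum f A = sum f (A \<inter> B)" by (rule sum.mono_neutral_right) (use assms in auto)
  also have "\<dots> = sum g (A \<inter> B)" by (rule sum.cong) (use assms in auto)
  also have "\<dots> = sum g B" by (rule sum.mono_neutral_left) (use assms in auto)
  finally show ?thesis .
qed

lemma sum_int_nat: "(\<Sum>n\<in>{0..int a}. g n) = (\<Sum>i\<le>a. g (int i))"
proof -
  have "{0..int a} = int ` {..a}"
    by (auto simp: image_iff) (metis atMost_iff nat_0_le nat_le_iff)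
  then show ?thesis by (simp add: sum.reindex)
qed

lemma diffop_bound: "is_diffop D \<Longrightarrow> \<exists>a::nat. \<forall>n. n > int a \<longrightarrow> D n = 0"
proof -
  assume "is_diffop D"
  then obtain N where N: "\<forall>n>N. D n = 0" by (auto simp: is_diffop_def is_psido_def)
  have "\<forall>n. n > int (nat N) \<longrightarrow> D n = 0" using N by auto
  then show ?thesis by blast
qed

lemma act_nat:
  assumes "is_diffop D" "\<forall>n > int a. D n = 0"
  shows "act D w = (\<Sum>i\<le>a. D (int i) * (rderiv ^^ i) w)"
proof -
  have "act D w = (\<Sum>n\<in>{0..int a}. D n * (rderiv ^^ nat n) w)"
    unfolding act_def
    by (rule sum_cong_support) (use assms ubnd_prop[of D] in \<open>auto simp: is_diffop_def\<close>)
  then show ?thesis by (simp add: sum_int_nat)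
qed

lemma weyl_act: "E \<in> weyl \<Longrightarrow> act E (polyR h) \<in> range polyR"
  unfolding act_def weyl_def by (auto intro!: rP_sum rP_mult rP_rd)

lemma ibinom_nat: "ibinom (int i) k = int (i choose k)"
  by (simp add: ibinom_def)

lemma opmult_diffop:
  assumes D: "is_diffop D" "\<forall>n > int a. D n = 0"
      and E: "is_diffop E" "\<forall>n > int b. E n = 0"
  shows "opmult D E d = (\<Sum>i\<le>a. \<Sum>j\<le>b. if d \<le> int i + int j then
     of_nat (i choose nat (int i + int j - d)) * D (int i) * (rderiv ^^ nat (int i + int j - d)) (E (int j)) else 0)"
proof -
  define F where "F m n = of_int (ibinom m (nat (m+n-d))) * D m * (rderiv ^^ nat (m+n-d)) (E n)" for m n
  have Dneg: "D m = 0" if "m < 0" for m using D(1) that by (simp add: is_diffop_def)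
  have Eneg: "E m = 0" if "m < 0" for m using E(1) that by (simp add: is_diffop_def)
  have DuE: "D m = 0" if "m > ubnd D" for m using D(1) that ubnd_prop by (auto simp: is_diffop_def)
  have EuE: "E m = 0" if "m > ubnd E" for m using E(1) that ubnd_prop by (auto simp: is_diffop_def)
  have inner: "(\<Sum>n\<in>{d-m..ubnd E}. F m n) = (\<Sum>n\<in>{0..int b}. if d \<le> m+n then F m n else 0)" for m
  proof (rule sum_cong_support)
    fix n assume "n \<in> {d-m..ubnd E} - {0..int b}"
    then have "E n = 0" using Eneg E(2) by force
    then show "F m n = 0" by (simp add: F_def)
  next
    fix n assume "n \<in> {0..int b} - {d-m..ubnd E}"
    then show "(if d \<le> m+n then F m n else 0) = 0" using EuE by (auto simp: F_def)
  qed auto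
  have "opmult D E d = (\<Sum>m\<in>{d - ubnd E..ubnd D}. \<Sum>n\<in>{0..int b}. if d \<le> m+n then F m n else 0)"
    unfolding opmult_def F_def[symmetric] using inner by simp
  also have "\<dots> = (\<Sum>m\<in>{0..int a}. \<Sum>n\<in>{0..int b}. if d \<le> m+n then F m n else 0)"
  proof (rule sum_cong_support)
    fix m assume "m \<in> {d - ubnd E..ubnd D} - {0..int a}"
    then have "D m = 0" using Dneg D(2) by force
    then show "(\<Sum>n\<in>{0..int b}. if d \<le> m+n then F m n else 0) = 0" by (intro sum.neutral) (simp add: F_def)
  next
    fix m assume m: "m \<in> {0..int a} - {d - ubnd E..ubnd D}"
    show "(\<Sum>n\<in>{0..int b}. if d \<le> m+n then F m n else 0) = 0"
    proof (cases "m > ubnd D")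
      case True then show ?thesis by (intro sum.neutral) (simp add: DuE F_def)
    next
      case False
      then have "m < d - ubnd E" using m by auto
      then show ?thesis by (intro sum.neutral) (auto simp: F_def EuE)
    qed
  qed auto
  also have "\<dots> = (\<Sum>i\<le>a. \<Sum>j\<le>b. if d \<le> int i + int j then
     of_nat (i choose nat (int i + int j - d)) * D (int i) * (rderiv ^^ nat (int i + int j - d)) (E (int j)) else 0)"
    unfolding F_def sum_int_nat ibinom_nat of_int_of_nat_eq ..
  finally show ?thesis .
qed


lemma opmult_diffop_bound:
  assumes D: "is_diffop D" "\<forall>n > int a. D n = 0"
      and E: "is_diffop E" "\<forall>n > int b. E n = 0"
  shows "is_diffop (opmult D E)" "\<And>d. d > int (a + b) \<Longrightarrow> opmult D E d = 0"
proof -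
  show hi: "opmult D E d = 0" if "d > int (a + b)" for d
    using that by (subst opmult_diffop[where a=a and b=b, OF D E]) (intro sum.neutral ballI, auto)
  have lo: "opmult D E d = 0" if "d < 0" for d
  proof -
    have ch: "i choose nat (int i + int j - d) = 0" for i j
      using that by (intro binomial_eq_0) linarith
    then show ?thesis by (subst opmult_diffop[where a=a and b=b, OF D E]) (intro sum.neutral ballI, simp add: ch)
  qed
  show "is_diffop (opmult D E)"
    unfolding is_diffop_def is_psido_def using hi lo by blast
qed

lemma rev_sum:
  fixes f :: "nat \<Rightarrow> nat \<Rightarrow> 'a::comm_monoid_add"
  assumes "n \<le> N"
  shows "(\<Sum>d\<le>N. if d \<le> n then f (n - d) d else 0) = (\<Sum>k\<le>n. f k (n - k))"
proof -
  have "(\<Sum>d\<le>N. if d \<le> n then f (n - d) d else 0) = (\<Sum>d\<le>n. f (n - d) d)"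
    using assms by (intro sum_cong_support) auto
  also have "\<dots> = (\<Sum>k\<le>n. f k (n - k))"
    using sum.nat_diff_reindex[of "\<lambda>d. f (n - d) d" "Suc n"]
    by (simp add: lessThan_Suc_atMost)
  finally show ?thesis .
qed

lemma act_opmult:
  assumes D: "is_diffop D" "\<forall>n > int a. D n = 0"
      and E: "is_diffop E" "\<forall>n > int b. E n = 0"
  shows "act (opmult D E) w = act D (act E w)"
proof -
  define X where "X i j k = of_nat (i choose k) * D (int i) * (rderiv ^^ k) (E (int j))" for i j k
  have key: "(\<Sum>d\<le>a+b. (if d \<le> i + j then X i j (i + j - d) else 0) * (rderiv ^^ d) w)
     = D (int i) * (\<Sum>k\<le>i. of_nat (i choose k) * (rderiv ^^ k) (E (int j)) * (rderiv ^^ (i - k)) ((rderiv ^^ j) w))"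
    if ij: "i \<le> a" "j \<le> b" for i j
  proof -
    have "(\<Sum>d\<le>a+b. (if d \<le> i + j then X i j (i + j - d) else 0) * (rderiv ^^ d) w)
       = (\<Sum>d\<le>a+b. if d \<le> i + j then X i j (i + j - d) * (rderiv ^^ d) w else 0)"
      by (intro sum.cong) auto
    also have "\<dots> = (\<Sum>k\<le>i+j. X i j k * (rderiv ^^ (i + j - k)) w)"
      using rev_sum[of "i+j" "a+b" "\<lambda>k d. X i j k * (rderiv ^^ d) w"] ij by simp
    also have "\<dots> = (\<Sum>k\<le>i. X i j k * (rderiv ^^ (i + j - k)) w)"
      by (intro sum_cong_support) (auto simp: X_def binomial_eq_0)
    also have "\<dots> = D (int i) * (\<Sum>k\<le>i. of_nat (i choose k) * (rderiv ^^ k) (E (int j)) * (rderiv ^^ (i - k)) ((rderiv ^^ j) w))"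
    proof -
      have "(rderiv ^^ (i - k)) ((rderiv ^^ j) w) = (rderiv ^^ (i + j - k)) w" if "k \<le> i" for k
        using that funpow_add[of "i - k" j rderiv] by (simp add: Nat.add_diff_assoc2)
      then show ?thesis by (simp add: sum_distrib_left X_def algebra_simps)
    qed
    finally show ?thesis .
  qed
  have "act (opmult D E) w = (\<Sum>d\<le>a+b. opmult D E (int d) * (rderiv ^^ d) w)"
    by (rule act_nat) (use opmult_diffop_bound[where a=a and b=b, OF D E] in auto)
  also have "\<dots> = (\<Sum>d\<le>a+b. (\<Sum>i\<le>a. \<Sum>j\<le>b. if d \<le> i + j then X i j (i + j - d) else 0) * (rderiv ^^ d) w)"
  proof (intro sum.cong refl)
    fix d assume "d \<in> {..a+b}"
    have nd: "nat (int i + int j - int d) = i + j - d" if "d \<le> i + j" for i j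
      using that by linarith
    have "opmult D E (int d) = (\<Sum>i\<le>a. \<Sum>j\<le>b. if d \<le> i + j then X i j (i + j - d) else 0)"
      unfolding X_def
      by (subst opmult_diffop[where a=a and b=b, OF D E]) (intro sum.cong refl, auto simp: nd)
    then show "opmult D E (int d) * (rderiv ^^ d) w = (\<Sum>i\<le>a. \<Sum>j\<le>b. if d \<le> i + j then X i j (i + j - d) else 0) * (rderiv ^^ d) w"
      by simp
  qed
  also have "\<dots> = (\<Sum>i\<le>a. \<Sum>j\<le>b. \<Sum>d\<le>a+b. (if d \<le> i + j then X i j (i + j - d) else 0) * (rderiv ^^ d) w)"
    by (simp add: sum_distrib_right sum.swap[of _ "{..a+b}"])
  also have "\<dots> = (\<Sum>i\<le>a. \<Sum>j\<le>b. D (int i) * (\<Sum>k\<le>i. of_nat (i choose k) * (rderiv ^^ k) (E (int j)) * (rderiv ^^ (i - k)) ((rderiv ^^ j) w)))"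
    using key by simp
  also have "\<dots> = (\<Sum>i\<le>a. D (int i) * (rderiv ^^ i) (\<Sum>j\<le>b. E (int j) * (rderiv ^^ j) w))"
    by (simp add: rd_sum rd_mult sum_distrib_left)
  also have "\<dots> = act D (act E w)"
    using act_nat[where a=a, OF D, of "act E w"] act_nat[where a=b, OF E, of w] by simp
  finally show ?thesis .
qed

lemma pderiv_iter_monom:
  "(pderiv ^^ j) (monom (1::complex) n) = monom (of_nat (\<Prod>i<j. n - i)) (n - j)"
  by (induct j) (simp_all add: pderiv_monom mult_ac)

lemma weyl_of_preserve:
  assumes E: "is_diffop E" and P: "\<forall>h. act E (polyR h) \<in> range polyR"
  shows "E \<in> weyl"
proof -
  obtain a where a: "\<forall>n>int a. E n = 0" using diffop_bound[OF E] by blast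
  have "E (int n) \<in> range polyR" for n
  proof (induction n rule: less_induct)
    case (less n)
    show ?case
    proof (cases "n \<le> a")
      case False then show ?thesis using a rP_0 by simp
    next
      case True
      define c where "c j = (of_nat (\<Prod>i<j. n - i) :: complex)" for j
      define f where "f j = E (int j) * polyR (monom (c j) (n - j))" for j
      have act: "act E (polyR (monom 1 n)) = (\<Sum>j\<le>a. f j)"
        by (simp add: act_nat[OF E a] rd_polyR pderiv_iter_monom c_def f_def)
      have cz: "c j = 0" if "j > n" for j
      proof -
        have "(\<Prod>i<j. n - i) = 0" using that by (intro prod_zero) auto
        then show ?thesis by (simp add: c_def)
      qed
      have "(\<Sum>j\<le>a. f j) = (\<Sum>j\<le>n. f j)"
        using True by (intro sum_cong_support) (auto simp: f_def cz)
      also have "\<dots> = (\<Sum>j<n. f j) + f n"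
        by (simp add: lessThan_Suc_atMost[symmetric])
      finally have eq: "act E (polyR (monom 1 n)) = (\<Sum>j<n. f j) + f n" using act by simp
      have S: "(\<Sum>j<n. f j) \<in> range polyR"
        using less by (intro rP_sum) (auto simp: f_def intro!: rP_mult)
      have "f n \<in> range polyR"
        using rP_diff[OF P[rule_format, of "monom 1 n"] S] eq by simp
      then obtain q where q: "E (int n) * polyR [:c n:] = polyR q" by (auto simp: f_def monom_0)
      have cn: "c n \<noteq> 0" by (simp add: c_def)
      have "polyR (smult (inverse (c n)) q) * polyR [:c n:] = polyR q"
        using cn by (simp flip: polyR_mult)
      then have "E (int n) * polyR [:c n:] = polyR (smult (inverse (c n)) q) * polyR [:c n:]"
        using q by simp
      moreover have "polyR [:c n:] \<noteq> 0" using cn by simp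
      ultimately have "E (int n) = polyR (smult (inverse (c n)) q)"
        by (rule mult_right_cancel[THEN iffD1, rotated])
      then show ?thesis by simp
    qed
  qed
  then have "E n \<in> range polyR" for n
  proof (cases "n < 0")
    case True then show ?thesis using E rP_0 by (simp add: is_diffop_def)
  next
    case False
    then obtain m where "n = int m" using nonneg_int_cases by (metis linorder_not_less)
    then show ?thesis using \<open>\<And>n. E (int n) \<in> range polyR\<close> by simp
  qed
  then show ?thesis using E by (simp add: weyl_def)
qed

definition mul :: "rfun \<Rightarrow> op" where "mul x = (\<lambda>n. if n = 0 then x else 0)"

lemma mul_diffop: "is_diffop (mul x)" "\<forall>n>int 0. mul x n = 0"
  by (auto simp: mul_def is_diffop_def is_psido_def)

lemma act_mul: "act (mul x) w = x * w"
  unfolding act_nat[OF mul_diffop] by (simp add: mul_def)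

lemma neg_part_zero:
  assumes q: "is_psido q" and g: "g \<noteq> 0" and W: "opmult q (mul g) \<in> weyl"
  shows "\<forall>n<0. q n = 0"
proof (rule ccontr)
  assume "\<not> (\<forall>n<0. q n = 0)"
  then obtain n where n: "n < 0" "q n \<noteq> 0" by auto
  define S where "S = {k::nat. q (-1 - int k) \<noteq> 0}"
  have "nat (-1 - n) \<in> S" using n by (simp add: S_def)
  then have k0S: "(LEAST k. k \<in> S) \<in> S" by (rule LeastI)
  define k0 where "k0 = (LEAST k. k \<in> S)"
  define M where "M = -1 - int k0"
  have qM: "q M \<noteq> 0" using k0S by (simp add: S_def M_def k0_def)
  have Mneg: "M < 0" by (simp add: M_def)
  have between: "q m = 0" if "M < m" "m < 0" for m
  proof -
    have "nat (-1 - m) < k0" using that by (simp add: M_def)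
    then have "nat (-1 - m) \<notin> S" unfolding k0_def by (rule not_less_Least)
    then show ?thesis using that by (simp add: S_def)
  qed
  let ?g = "mul g"
  have ug: "ubnd ?g \<ge> 0"
  proof (rule ccontr)
    assume "\<not> ubnd ?g \<ge> 0"
    then have "?g 0 = 0" using ubnd_prop[of ?g 0] mul_diffop(1)[of g] by (simp add: is_diffop_def)
    then show False using g by (simp add: mul_def)
  qed
  have uq: "ubnd q \<ge> M"
    using ubnd_prop[OF q, of M] qM by (cases "ubnd q \<ge> M") auto
  define G where "G m = of_int (ibinom m (nat (m - M))) * q m * (rderiv ^^ nat (m - M)) g" for m
  have inner: "(\<Sum>n\<in>{M - m..ubnd ?g}. of_int (ibinom m (nat (m + n - M))) * q m * (rderiv ^^ nat (m + n - M)) (?g n))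
      = (if M \<le> m then G m else 0)" for m
  proof -
    have "(\<Sum>n\<in>{M - m..ubnd ?g}. of_int (ibinom m (nat (m + n - M))) * q m * (rderiv ^^ nat (m + n - M)) (?g n))
       = (\<Sum>n\<in>{M - m..ubnd ?g}. if n = 0 then G m else 0)"
      by (intro sum.cong refl) (auto simp: mul_def G_def)
    also have "\<dots> = (if M \<le> m then G m else 0)"
      using ug by (simp add: sum.delta)
    finally show ?thesis .
  qed
  have "opmult q ?g M = (\<Sum>m\<in>{M - ubnd ?g..ubnd q}. if M \<le> m then G m else 0)"
    unfolding opmult_def using inner by simp
  also have "\<dots> = (\<Sum>m\<in>{M}. G m)"
  proof (rule sum_cong_support)
    fix m assume m: "m \<in> {M - ubnd ?g..ubnd q} - {M}"
    show "(if M \<le> m then G m else 0) = 0"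
    proof (cases "M < m")
      case True
      show ?thesis
      proof (cases "m < 0")
        case True then show ?thesis using between \<open>M < m\<close> by (simp add: G_def)
      next
        case False
        then have "ibinom m (nat (m - M)) = 0"
          using Mneg by (simp add: ibinom_def binomial_eq_0)
        then show ?thesis by (simp add: G_def)
      qed
    qed (use m in auto)
  qed (use ug uq in auto)
  also have "\<dots> = q M * g" by (simp add: G_def ibinom_def)
  finally have "opmult q ?g M = q M * g" .
  moreover have "opmult q ?g M = 0" using W Mneg by (simp add: weyl_def is_diffop_def)
  ultimately show False using qM g by simp
qed

lemma dvd_power_diff_poly: "(a - b) dvd (a ^ n - b ^ n :: 'a::comm_ring_1)"
proof (induct n)
  case (Suc n)
  have "a ^ Suc n - b ^ Suc n = a * (a ^ n - b ^ n) + (a - b) * b ^ n" by (simp add: algebra_simps)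
  then show ?case using Suc by simp
qed simp

definition tay :: "complex poly \<Rightarrow> nat \<Rightarrow> complex poly \<Rightarrow> complex poly" where
  "tay s N h = (\<Sum>j<N. smult (1 / fact j) (s ^ j * (pderiv ^^ j) h))"

lemma pderiv_iter_Suc: "(pderiv ^^ Suc j) h = pderiv ((pderiv ^^ j) h)" by simp

lemma fact_aux: "smult (1 / fact N) A + smult (1 / fact (Suc N)) (B - smult (of_nat (Suc N)) A) = smult (1 / fact (Suc N)) (B::complex poly)"
proof -
  have e: "(1 / fact (Suc N)) * of_nat (Suc N) = (1 / fact N :: complex)"
    by (simp add: fact_Suc field_simps del: of_nat_Suc)
  show ?thesis by (simp add: smult_diff_right e del: of_nat_Suc)
qed

lemma tay_deriv:
  fixes c :: complex
  shows "pderiv (tay [:c, -1:] (Suc N) h) = smult (1 / fact N) ([:c, -1:] ^ N * (pderiv ^^ Suc N) h)"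
proof (induct N)
  case 0
  then show ?case by (simp add: tay_def)
next
  case (Suc N)
  let ?s = "[:c, -1:] :: complex poly"
  have ps: "pderiv ?s = -1" by (simp add: pderiv_pCons) (metis add.inverse_neutral minus_pCons one_pCons)
  have "tay ?s (Suc (Suc N)) h = tay ?s (Suc N) h + smult (1 / fact (Suc N)) (?s ^ Suc N * (pderiv ^^ Suc N) h)"
    by (simp add: tay_def)
  then have "pderiv (tay ?s (Suc (Suc N)) h) = smult (1 / fact N) (?s ^ N * (pderiv ^^ Suc N) h)
     + smult (1 / fact (Suc N)) (smult (of_nat (Suc N)) (?s ^ N) * (-1) * (pderiv ^^ Suc N) h + ?s ^ Suc N * (pderiv ^^ Suc (Suc N)) h)"
    using Suc by (simp add: pderiv_add pderiv_smult pderiv_mult pderiv_power_Suc ps algebra_simps del: power_Suc funpow.simps)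
      (simp add: algebra_simps)
  also have "\<dots> = smult (1 / fact (Suc N)) (?s ^ Suc N * (pderiv ^^ Suc (Suc N)) h)"
  proof -
    have "smult (of_nat (Suc N)) (?s ^ N) * (-1) * (pderiv ^^ Suc N) h + ?s ^ Suc N * (pderiv ^^ Suc (Suc N)) h
       = ?s ^ Suc N * (pderiv ^^ Suc (Suc N)) h - smult (of_nat (Suc N)) (?s ^ N * (pderiv ^^ Suc N) h)"
      by (simp add: algebra_simps del: power_Suc funpow.simps of_nat_Suc)
    then show ?thesis using fact_aux[of N "?s ^ N * (pderiv ^^ Suc N) h" "?s ^ Suc N * (pderiv ^^ Suc (Suc N)) h"]
      by (simp del: power_Suc funpow.simps of_nat_Suc)
  qed
  finally show ?case .
qed


lemma tay_at:
  fixes c :: complex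
  shows "poly (tay [:c, -1:] (Suc M) h) c = poly h c"
proof -
  have "tay [:c, -1:] (Suc M) h = h + (\<Sum>j<M. smult (1 / fact (Suc j)) ([:c, -1:] ^ Suc j * (pderiv ^^ Suc j) h))"
    unfolding tay_def by (subst sum.lessThan_Suc_shift) simp
  then show ?thesis by (simp add: poly_sum del: funpow.simps power_Suc)
qed

lemma flat_root_dvd:
  fixes q :: "complex poly"
  assumes "poly q c = 0" "[:-c, 1:] ^ M dvd pderiv q"
  shows "[:-c, 1:] ^ Suc M dvd q"
proof (cases "q = 0")
  case False
  show ?thesis
  proof (cases "pderiv q = 0")
    case True
    then have "degree q = 0" by (simp add: pderiv_eq_0_iff)
    then obtain a where "q = [:a:]" by (metis degree_eq_zeroE)
    then show ?thesis using assms False by simp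
  next
    case False2: False
    have "order c q = Suc (order c (pderiv q))" by (rule order_pderiv) (use False assms in auto)
    moreover have "M \<le> order c (pderiv q)" using assms(2) False2 by (simp add: order_divides)
    ultimately show ?thesis using False order_divides[of c "Suc M" q] by simp
  qed
qed simp

lemma tay_mod:
  fixes c :: complex
  shows "[:-c, 1:] ^ N dvd (tay [:c, -1:] N h - [:poly h c:])"
proof (cases N)
  case (Suc M)
  have d1: "[:-c, 1:] dvd [:c, -1:]" by (rule dvdI[of _ _ "-1"]) simp
  have "[:-c, 1:] ^ M dvd [:c, -1:] ^ M" by (rule dvd_power_same[OF d1])
  then have "[:-c, 1:] ^ M dvd pderiv (tay [:c, -1:] N h - [:poly h c:])"
    unfolding Suc pderiv_diff tay_deriv pderiv_singleton diff_zero
    by (intro dvd_smult dvd_mult2)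
  then show ?thesis unfolding Suc by (intro flat_root_dvd) (simp_all add: tay_at)
qed simp


lemma lin_coprime:
  fixes c c0 :: complex
  assumes "c \<noteq> c0"
  shows "coprime [:-c, 1:] [:-c0, 1:]"
proof (rule coprimeI)
  fix d assume d: "d dvd [:-c, 1:]" "d dvd [:-c0, 1:]"
  then have "d dvd [:-c, 1:] - [:-c0, 1:]" by (rule dvd_diff)
  then have "d dvd [:c0 - c:]" by simp
  moreover have "is_unit [:c0 - c:]" using assms by (simp add: is_unit_const_poly_iff dvd_field_iff)
  ultimately show "is_unit d" by (rule dvd_unit_imp_unit)
qed

lemma crt:
  fixes \<Lambda> :: "complex set"
  assumes "finite \<Lambda>"
  shows "\<exists>\<sigma>. \<forall>c\<in>\<Lambda>. [:-c, 1:] ^ R dvd (\<sigma> - [:c:])"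
  using assms
proof (induct \<Lambda> rule: finite_induct)
  case empty then show ?case by simp
next
  case (insert c0 \<Lambda>)
  then obtain \<sigma>0 where s0: "\<forall>c\<in>\<Lambda>. [:-c, 1:] ^ R dvd (\<sigma>0 - [:c:])" by blast
  define P where "P = (\<Prod>c\<in>\<Lambda>. [:-c, 1:] ^ R)"
  define Q where "Q = [:-c0, 1:] ^ R"
  have "coprime P Q" unfolding P_def Q_def
  proof (intro prod_coprime_left)
    fix i assume "i \<in> \<Lambda>"
    then have "coprime [:-i, 1:] [:-c0, 1:]" using insert(2) by (intro lin_coprime) auto
    then show "coprime ([:-i, 1:] ^ R) ([:-c0, 1:] ^ R)" by simp
  qed
  then have "gcd P Q = 1" by (simp add: coprime_iff_gcd_eq_1)
  then obtain x y where bez: "x * P + y * Q = 1" using bezout_coefficients_fst_snd[of P Q] by metis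
  define \<sigma> where "\<sigma> = \<sigma>0 * (y * Q) + [:c0:] * (x * P)"
  have "[:-c, 1:] ^ R dvd (\<sigma> - [:c:])" if c: "c \<in> insert c0 \<Lambda>" for c
  proof (cases "c = c0")
    case True
    have "\<sigma> - [:c:] = (y * Q) * (\<sigma>0 - [:c0:])" unfolding \<sigma>_def True using bez by algebra
    then show ?thesis using True by (simp add: Q_def)
  next
    case False
    then have cL: "c \<in> \<Lambda>" using c by simp
    have "\<sigma> - [:c:] = (\<sigma>0 - [:c:]) + (x * P) * ([:c0:] - \<sigma>0)" unfolding \<sigma>_def using bez by algebra
    moreover have "[:-c, 1:] ^ R dvd P" unfolding P_def using insert(1) cL by (rule dvd_prodI)
    moreover have "[:-c, 1:] ^ R dvd \<sigma>0 - [:c:]" using s0 cL by blast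
    ultimately show ?thesis by (metis dvd_add dvd_mult2 dvd_mult)
  qed
  then show ?case by blast
qed

locale gdata =
  fixes L :: "complex set" and Vs :: "complex \<Rightarrow> complex poly set" and r :: "complex \<Rightarrow> nat"
    and m :: "complex poly" and W :: "rfun set"
  assumes fin: "finite L"
    and sub: "\<forall>c\<in>L. csubspace (Vs c)"
    and rr: "\<forall>c\<in>L. \<forall>p. [:-c, 1:] ^ r c dvd p \<longrightarrow> p \<in> Vs c"
    and Wdef: "W = (\<lambda>p. polyR p / polyR m) ` (\<Inter>c\<in>L. Vs c)"
    and m0: "m \<noteq> 0"
begin

definition f where "f = (\<Prod>c\<in>L. [:-c, 1:] ^ r c)"

lemma f0: "f \<noteq> 0" unfolding f_def by (simp add: fin)

lemma f_in: "f * h \<in> (\<Inter>c\<in>L. Vs c)"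
proof -
  have "f * h \<in> Vs c" if c: "c \<in> L" for c
  proof -
    have "[:-c, 1:] ^ r c dvd f" unfolding f_def using fin c by (rule dvd_prodI)
    then show ?thesis using rr c by auto
  qed
  then show ?thesis by blast
qed

lemma polyR_div_m: "polyR (q * m) / polyR m = polyR q"
  using m0 by (simp add: polyR_mult)

lemma mulf_RW: "mul (polyR f) \<in> RW W"
proof -
  have "act (mul (polyR f)) (polyR h) \<in> W" for h
  proof -
    have "act (mul (polyR f)) (polyR h) = polyR ((f * h) * m) / polyR m"
      using m0 by (simp add: act_mul polyR_mult)
    moreover have "(f * h) * m \<in> (\<Inter>c\<in>L. Vs c)" using f_in[of "h * m"] by (simp add: mult.assoc)
    ultimately show ?thesis unfolding Wdef by blast
  qed
  then show ?thesis unfolding RW_def using mul_diffop by blast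
qed

lemma mulf_weyl: "mul (polyR f) \<in> weyl"
  using mul_diffop(1) by (auto simp: weyl_def mul_def intro: rP_0)

lemma mulf_nz: "mul (polyR f) \<noteq> (\<lambda>_. 0)"
proof
  assume "mul (polyR f) = (\<lambda>_. 0)"
  then have "mul (polyR f) 0 = 0" by simp
  then show False using f0 by (simp add: mul_def)
qed

lemma V_add: "c \<in> L \<Longrightarrow> a \<in> Vs c \<Longrightarrow> b \<in> Vs c \<Longrightarrow> a + b \<in> Vs c"
  using sub by (auto simp: csubspace_def)
lemma V_smult: "c \<in> L \<Longrightarrow> a \<in> Vs c \<Longrightarrow> smult x a \<in> Vs c"
  using sub by (auto simp: csubspace_def)

lemma tay_diff_dvd:
  assumes "X dvd (t - s)"
  shows "X dvd (tay t N h - tay s N h)"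
proof -
  have "tay t N h - tay s N h = (\<Sum>j<N. smult (1 / fact j) ((t ^ j - s ^ j) * (pderiv ^^ j) h))"
    unfolding tay_def by (simp add: sum_subtractf[symmetric] smult_diff_right algebra_simps)
  also have "X dvd \<dots>"
    by (intro dvd_sum dvd_smult dvd_mult2 dvd_trans[OF assms dvd_power_diff_poly])
  finally show ?thesis .
qed

lemma exists_R: "\<exists>D\<in>RW W. act D 1 = w" if w: "w \<in> W"
proof -
  obtain p where p: "p \<in> (\<Inter>c\<in>L. Vs c)" and wp: "w = polyR p / polyR m" using w unfolding Wdef by blast
  define R where "R = Suc (\<Sum>c\<in>L. r c)"
  have rR: "r c \<le> R" if "c \<in> L" for c
    unfolding R_def using member_le_sum[of c L r] fin that by simp
  obtain \<sigma> where sig: "\<forall>c\<in>L. [:-c, 1:] ^ R dvd (\<sigma> - [:c:])" using crt[OF fin] by blast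
  define t where "t = \<sigma> - [:0, 1:]"
  define K where "K h = tay t R h" for h
  have Kmod: "[:-c, 1:] ^ R dvd (K h - [:poly h c:])" if c: "c \<in> L" for c h
  proof -
    have "t - [:c, -1:] = \<sigma> - [:c:]" unfolding t_def by (simp add: algebra_simps)
    then have "[:-c, 1:] ^ R dvd (K h - tay [:c, -1:] R h)"
      unfolding K_def using sig c by (intro tay_diff_dvd) simp
    then have "[:-c, 1:] ^ R dvd (K h - tay [:c, -1:] R h) + (tay [:c, -1:] R h - [:poly h c:])"
      using tay_mod by (rule dvd_add)
    moreover have "(K h - tay [:c, -1:] R h) + (tay [:c, -1:] R h - [:poly h c:]) = K h - [:poly h c:]"
      by (simp add: algebra_simps)
    ultimately show ?thesis by metis
  qed
  have pK: "p * K h \<in> (\<Inter>c\<in>L. Vs c)" for h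
  proof -
    have "p * K h \<in> Vs c" if c: "c \<in> L" for c
    proof -
      have "p * K h = smult (poly h c) p + p * (K h - [:poly h c:])"
        by (simp add: algebra_simps)
      moreover have "smult (poly h c) p \<in> Vs c" using p c V_smult by blast
      moreover have "p * (K h - [:poly h c:]) \<in> Vs c"
      proof -
        have "[:-c, 1:] ^ r c dvd [:-c, 1:] ^ R" using rR[OF c] by (rule le_imp_power_dvd)
        then have "[:-c, 1:] ^ r c dvd p * (K h - [:poly h c:])"
          using Kmod[OF c, of h] by (meson dvd_mult dvd_trans)
        then show ?thesis using rr c by blast
      qed
      ultimately show ?thesis using V_add c by metis
    qed
    then show ?thesis by blast
  qed
  define D where "D n = (if 0 \<le> n \<and> n < int R then w * polyR (smult (1 / fact (nat n)) (t ^ nat n)) else 0)" for n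
  have Ddiff: "is_diffop D" unfolding is_diffop_def is_psido_def D_def by (auto intro!: exI[of _ "int R"])
  have Dbd: "\<forall>n>int R. D n = 0" by (simp add: D_def)
  have actD: "act D (polyR h) = polyR (p * K h) / polyR m" for h
  proof -
    have "act D (polyR h) = (\<Sum>i\<le>R. D (int i) * (rderiv ^^ i) (polyR h))"
      by (rule act_nat[OF Ddiff Dbd])
    also have "\<dots> = (\<Sum>i<R. w * polyR (smult (1 / fact i) (t ^ i)) * polyR ((pderiv ^^ i) h))"
      by (rule sum_cong_support) (auto simp: D_def rd_polyR)
    also have "\<dots> = w * polyR (K h)"
      by (simp add: K_def tay_def polyR_sum sum_distrib_left mult.assoc flip: polyR_mult)
    also have "\<dots> = polyR (p * K h) / polyR m" by (simp add: wp polyR_mult)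
    finally show ?thesis .
  qed
  have z: "(pderiv ^^ Suc j) 1 = (0 :: complex poly)" for j
    by (induct j) simp_all
  have "K 1 = 1"
  proof -
    have "K 1 = (\<Sum>j<Suc (\<Sum>c\<in>L. r c). smult (1 / fact j) (t ^ j * (pderiv ^^ j) 1))"
      by (simp add: K_def tay_def R_def)
    also have "\<dots> = smult (1 / fact 0) (t ^ 0 * (pderiv ^^ 0) 1) + (\<Sum>j<(\<Sum>c\<in>L. r c). smult (1 / fact (Suc j)) (t ^ Suc j * (pderiv ^^ Suc j) 1))"
      by (rule sum.lessThan_Suc_shift)
    also have "\<dots> = 1" by (simp only: z) simp
    finally show ?thesis .
  qed
  have "D \<in> RW W"
    unfolding RW_def using Ddiff actD pK unfolding Wdef by blast
  moreover have "act D 1 = w"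
    using actD[of 1] \<open>K 1 = 1\<close> by (simp add: wp)
  ultimately show ?thesis by blast
qed

end

lemma comp_weyl:
  assumes D: "D \<in> LW W" and D': "D' \<in> RW W"
  shows "opmult D D' \<in> weyl"
proof -
  have Dd: "is_diffop D" using D by (simp add: LW_def)
  have D'd: "is_diffop D'" using D' by (simp add: RW_def)
  obtain a where a: "\<forall>n>int a. D n = 0" using diffop_bound[OF Dd] by blast
  obtain b where b: "\<forall>n>int b. D' n = 0" using diffop_bound[OF D'd] by blast
  note bd = opmult_diffop_bound[OF Dd a D'd b]
  show ?thesis
  proof (rule weyl_of_preserve[OF bd(1)], intro allI)
    fix h
    have "act (opmult D D') (polyR h) = act D (act D' (polyR h))"
      by (rule act_opmult[OF Dd a D'd b])
    moreover have "act D' (polyR h) \<in> W" using D' by (simp add: RW_def)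
    ultimately show "act (opmult D D') (polyR h) \<in> range polyR" using D by (simp add: LW_def)
  qed
qed

theorem lemma5p3:
  assumes "W \<in> Grad"
  shows "LW W = dual_right (RW W)"
proof -
  obtain L Vs where fin: "finite L"
    and cs: "\<forall>c\<in>L. csubspace (Vs c) \<and> (\<exists>r::nat. \<forall>p. [:-c, 1:] ^ r dvd p \<longrightarrow> p \<in> Vs c)"
    and Wd: "W = (\<lambda>p. polyR p / polyR (\<Prod>c\<in>L. [:-c, 1:] ^ codim (Vs c))) ` (\<Inter>c\<in>L. Vs c)"
    using assms unfolding Grad_def by blast
  obtain r where r: "\<forall>c\<in>L. \<forall>p. [:-c, 1:] ^ r c dvd p \<longrightarrow> p \<in> Vs c"
    using cs by metis
  define m where "m = (\<Prod>c\<in>L. [:-c, 1:] ^ codim (Vs c))"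
  have m0: "m \<noteq> 0" unfolding m_def using fin by simp
  interpret gdata L Vs r m W
    by unfold_locales (use fin cs r Wd m0 in \<open>auto simp: m_def\<close>)
  show ?thesis
  proof
    show "LW W \<subseteq> dual_right (RW W)"
    proof
      fix D assume D: "D \<in> LW W"
      have "is_psido D" using D by (simp add: LW_def is_diffop_def)
      moreover have "opmult D (mul (polyR f)) \<in> weyl" using comp_weyl[OF D mulf_RW] .
      ultimately have "D \<in> Qfield" unfolding Qfield_def using mulf_weyl mulf_nz by blast
      then show "D \<in> dual_right (RW W)" unfolding dual_right_def using comp_weyl[OF D] by blast
    qed
  next
    show "dual_right (RW W) \<subseteq> LW W"
    proof
      fix q assume q: "q \<in> dual_right (RW W)"
      then have qQ: "q \<in> Qfield" and qR: "\<forall>D\<in>RW W. opmult q D \<in> weyl" by (auto simp: dual_right_def)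
      have qp: "is_psido q" using qQ by (simp add: Qfield_def)
      have "\<forall>n<0. q n = 0"
        by (rule neg_part_zero[OF qp _ qR[rule_format, OF mulf_RW]]) (use f0 in simp)
      then have qd: "is_diffop q" using qp by (simp add: is_diffop_def)
      obtain a where a: "\<forall>n>int a. q n = 0" using diffop_bound[OF qd] by blast
      have "act q w \<in> range polyR" if w: "w \<in> W" for w
      proof -
        obtain D where D: "D \<in> RW W" and Dw: "act D 1 = w" using exists_R[OF w] by blast
        have Dd: "is_diffop D" using D by (simp add: RW_def)
        obtain b where b: "\<forall>n>int b. D n = 0" using diffop_bound[OF Dd] by blast
        have "act q w = act (opmult q D) (polyR 1)"
          using act_opmult[OF qd a Dd b, of 1] Dw by simp
        then show ?thesis using weyl_act[OF qR[rule_format, OF D], of 1] by simp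
      qed
      then show "q \<in> LW W" using qd by (simp add: LW_def)
    qed
  qed
qed

end
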